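(* For every $d\ge 1$ there exists $\beta_d>0$ such that the following holds. Let $\Delta,\Delta'\subset\mathbb{R}^d$ be vertex sets of regular simplices of edge length $1$ with $\mathrm{diam}(\Delta\cup\Delta')\le 1+\beta$ for some $0\le\beta<\beta_d$. Then \[ \mathrm{dist}_H(\Delta,\Delta')\le (d+1)d^2\,\beta . \]
   Context: A regular simplex of edge length $1$ in $\mathbb{R}^d$ is (identified with) its vertex set: $d+1$ points at pairwise Euclidean distance exactly $1$. $\mathrm{diam}(A)=\sup_{x,y\in A}\|x-y\|_2$. For nonempty compact $A,B\subset\mathbb{R}^d$, the Hausdorff distance is $\mathrm{dist}_H(A,B)=\max\{\sup_{a\in A}\inf_{b\in B}\|a-b\|_2,\ \sup_{b\in B}\inf_{a\in A}\|a-b\|_2\}$. *)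

theory Defs
  imports "HOL-Analysis.Analysis"
begin

definition unit_regular_simplex :: "'a::euclidean_space set \<Rightarrow> bool" where
  "unit_regular_simplex S \<longleftrightarrow> finite S \<and> card S = DIM('a) + 1 \<and>
     (\<forall>x\<in>S. \<forall>y\<in>S. x \<noteq> y \<longrightarrow> dist x y = 1)"

text \<open>Hausdorff distance (for nonempty compact sets).\<close>
definition hausdorff_dist :: "'a::metric_space set \<Rightarrow> 'a set \<Rightarrow> real" where
  "hausdorff_dist A B =
     max (SUP a\<in>A. INF b\<in>B. dist a b) (SUP b\<in>B. INF a\<in>A. dist a b)"

end

theory Submission
  imports Defs
begin


definition cen :: "'a::euclidean_space set \<Rightarrow> 'a" where
 "cen S = (1 / real (card S)) *\<^sub>R (\<Sum>S)"

lemma sum_minus_cen: assumes "finite S" "S \<noteq> {}" shows "(\<Sum>b\<in>S. b - cen S) = 0"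
  using assms by (simp add: sum_subtractf cen_def sum_constant_scaleR)

lemma par_axis: fixes x :: "'a::euclidean_space"
  assumes "finite S" "S \<noteq> {}"
  shows "(\<Sum>b\<in>S. (norm (x - b))^2) = real (card S) * (norm (x - cen S))^2 + (\<Sum>b\<in>S. (norm (b - cen S))^2)"
proof -
  let ?c = "cen S"
  have "(\<Sum>b\<in>S. (norm (x - b))^2) = (\<Sum>b\<in>S. (norm (x - ?c))^2 - 2 * ((x - ?c) \<bullet> (b - ?c)) + (norm (b - ?c))^2)"
  proof (rule sum.cong)
    fix b assume "b \<in> S"
    have "x - b = (x - ?c) - (b - ?c)" by simp
    then show "(norm (x - b))^2 = (norm (x - ?c))^2 - 2 * ((x - ?c) \<bullet> (b - ?c)) + (norm (b - ?c))^2"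
      by (simp add: power2_norm_eq_inner inner_diff_left inner_diff_right inner_commute algebra_simps)
  qed simp
  also have "\<dots> = real (card S) * (norm (x - ?c))^2 - 2 * (\<Sum>b\<in>S. (x - ?c) \<bullet> (b - ?c)) + (\<Sum>b\<in>S. (norm (b - ?c))^2)"
    by (simp add: sum.distrib sum_subtractf sum_distrib_left[symmetric])
  also have "(\<Sum>b\<in>S. (x - ?c) \<bullet> (b - ?c)) = 0"
    by (metis inner_sum_right sum_minus_cen[OF assms] inner_zero_right)
  finally show ?thesis by simp
qed

lemma gram_indep:
  fixes B :: "'a::real_inner set"
  assumes fin: "finite B" and dg: "\<And>b. b\<in>B \<Longrightarrow> b \<bullet> b = a"
    and od: "\<And>b b'. b\<in>B \<Longrightarrow> b'\<in>B \<Longrightarrow> b \<noteq> b' \<Longrightarrow> b \<bullet> b' = e"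
    and ne: "a \<noteq> e" and ne2: "a + (real (card B) - 1) * e \<noteq> 0"
  shows "independent B"
proof -
  { fix u assume u: "(\<Sum>v\<in>B. u v *\<^sub>R v) = 0"
    have key: "u b * (a - e) + e * (\<Sum>v\<in>B. u v) = 0" if b: "b\<in>B" for b
    proof -
      have "0 = b \<bullet> (\<Sum>v\<in>B. u v *\<^sub>R v)" using u by simp
      also have "\<dots> = (\<Sum>v\<in>B. u v * (b \<bullet> v))" by (simp add: inner_sum_right)
      also have "\<dots> = (\<Sum>v\<in>B. u v * (if v = b then a else e))"
        using dg od b by (intro sum.cong) auto
      also have "\<dots> = (\<Sum>v\<in>B. u v * e + (if v = b then u v * (a - e) else 0))"
        by (intro sum.cong) (auto simp: algebra_simps)
      also have "\<dots> = e * (\<Sum>v\<in>B. u v) + u b * (a - e)"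
        using b fin by (simp add: sum.distrib sum_distrib_left mult.commute)
      finally show ?thesis by simp
    qed
    have "(\<Sum>b\<in>B. u b * (a - e) + e * (\<Sum>v\<in>B. u v)) = 0" using key by simp
    moreover have "(\<Sum>b\<in>B. u b * (a - e) + e * (\<Sum>v\<in>B. u v)) = 
       (\<Sum>v\<in>B. u v) * (a - e) + real (card B) * (e * (\<Sum>v\<in>B. u v))"
      by (simp add: sum.distrib sum_distrib_right[symmetric])
    ultimately have "(\<Sum>v\<in>B. u v) * (a + (real (card B) - 1) * e) = 0"
      by (simp add: algebra_simps)
    then have s0: "(\<Sum>v\<in>B. u v) = 0" using ne2 by simp
    have "\<forall>v\<in>B. u v = 0" using key s0 ne by auto
  }
  then show ?thesis using real_vector.dependent_finite[OF fin] by auto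
qed



lemma urs_basic: assumes "unit_regular_simplex (S::'a::euclidean_space set)"
  shows "finite S" "card S = DIM('a) + 1" "S \<noteq> {}"
  using assms unfolding unit_regular_simplex_def by auto

lemma urs_dist: assumes "unit_regular_simplex (S::'a::euclidean_space set)" "a \<in> S" "b \<in> S" "a \<noteq> b"
  shows "norm (a - b) = 1"
  using assms unfolding unit_regular_simplex_def by (auto simp: dist_norm)

lemma urs_sumdist: assumes u: "unit_regular_simplex (S::'a::euclidean_space set)" and a: "a \<in> S"
  shows "(\<Sum>b\<in>S. (norm (a - b))^2) = real DIM('a)"
proof -
  have fin: "finite S" using urs_basic[OF u] by simp
  have "(\<Sum>b\<in>S. (norm (a - b))^2) = (norm (a - a))^2 + (\<Sum>b\<in>S-{a}. (norm (a - b))^2)"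
    using sum.remove[OF fin a] by blast
  also have "(\<Sum>b\<in>S-{a}. (norm (a - b))^2) = (\<Sum>b\<in>S-{a}. 1)"
    using urs_dist[OF u a] by (intro sum.cong) auto
  finally show ?thesis using urs_basic[OF u] a fin by (simp add: card_Diff_singleton)
qed

lemma urs_R2: assumes u: "unit_regular_simplex (S::'a::euclidean_space set)" and b: "b \<in> S"
  shows "(norm (b - cen S))^2 = real DIM('a) / (2 * (real DIM('a) + 1))"
proof -
  note bs = urs_basic[OF u]
  define K where "K = (\<Sum>b\<in>S. (norm (b - cen S))^2)"
  define n where "n = real DIM('a)"
  have h: "(norm (a - cen S))^2 = (n - K) / (n + 1)" if a: "a \<in> S" for a
  proof -
    have "n = (n + 1) * (norm (a - cen S))^2 + K"
      using par_axis[OF bs(1) bs(3), of a] urs_sumdist[OF u a] bs(2) unfolding K_def n_def by (simp add: add.commute)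
    then show ?thesis by (simp add: field_simps n_def)
  qed
  have "K = (\<Sum>a\<in>S. (norm (a - cen S))^2)" by (simp add: K_def)
  also have "\<dots> = (\<Sum>a\<in>S. (n - K) / (n + 1))" by (rule sum.cong[OF refl]) (rule h)
  also have "\<dots> = real (card S) * ((n - K) / (n + 1))" by simp
  also have "\<dots> = n - K" using bs(2) unfolding n_def by (simp add: field_simps)
  finally have "K = n / 2" by simp
  with h[OF b] have "(norm (b - cen S))^2 = (n - n/2) / (n+1)" by simp
  also have "\<dots> = n / (2 * (n + 1))" unfolding n_def by (simp add: divide_simps)
  finally show ?thesis unfolding n_def .
qed

lemma aux1: "(n::real) \<ge> 0 \<Longrightarrow> (n/(2*(n+1)) + n/(2*(n+1)) - 1)/2 = -1/(2*(n+1))"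
proof -
  assume "n \<ge> 0" then show ?thesis by (simp add: divide_simps)
qed

lemma urs_inner: assumes u: "unit_regular_simplex (S::'a::euclidean_space set)" and ab: "a \<in> S" "b \<in> S" "a \<noteq> b"
  shows "(a - cen S) \<bullet> (b - cen S) = - 1 / (2 * (real DIM('a) + 1))"
proof -
  have "1 = (norm ((a - cen S) - (b - cen S)))^2" using urs_dist[OF u ab] by simp
  also have "\<dots> = (norm (a - cen S))^2 + (norm (b - cen S))^2 - 2 * ((a - cen S) \<bullet> (b - cen S))"
    by (simp add: power2_norm_eq_inner inner_diff_left inner_diff_right inner_commute algebra_simps)
  finally have "(a - cen S) \<bullet> (b - cen S) = ((norm (a - cen S))^2 + (norm (b - cen S))^2 - 1) / 2" by simp
  also have "\<dots> = (real DIM('a) / (2 * (real DIM('a) + 1)) + real DIM('a) / (2 * (real DIM('a) + 1)) - 1) / 2"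
    using urs_R2[OF u ab(1)] urs_R2[OF u ab(2)] by simp
  also have "\<dots> = - 1 / (2 * (real DIM('a) + 1))"
    by (rule aux1) simp
  finally show ?thesis .
qed

lemma urs_span: assumes u: "unit_regular_simplex (S::'a::euclidean_space set)"
  shows "span ((\<lambda>w. w - cen S) ` S) = UNIV"
proof -
  note bs = urs_basic[OF u]
  obtain w0 where w0: "w0 \<in> S" using bs(3) by auto
  define B where "B = (\<lambda>w. w - cen S) ` (S - {w0})"
  have inj: "inj_on (\<lambda>w. w - cen S) (S - {w0})" by (auto simp: inj_on_def)
  have cB: "card B = DIM('a)" unfolding B_def using card_image[OF inj] bs w0 by (simp add: card_Diff_singleton)
  have fB: "finite B" unfolding B_def using bs by simp
  define n where "n = real DIM('a)"
  have "independent B"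
  proof (rule gram_indep[OF fB, where a = "n / (2 * (n + 1))" and e = "- 1 / (2 * (n + 1))"])
    fix b assume "b \<in> B"
    then obtain w where "w \<in> S" "b = w - cen S" unfolding B_def by auto
    then show "b \<bullet> b = n / (2 * (n + 1))" using urs_R2[OF u] by (simp add: n_def power2_norm_eq_inner)
  next
    fix b b' assume "b \<in> B" "b' \<in> B" "b \<noteq> b'"
    then obtain w w' where "w \<in> S" "b = w - cen S" "w' \<in> S" "b' = w' - cen S" "w \<noteq> w'"
      unfolding B_def by auto
    then show "b \<bullet> b' = - 1 / (2 * (n + 1))" using urs_inner[OF u] by (simp add: n_def)
  next
    have "n \<ge> 0" unfolding n_def by simp
    then have "n / (2 * (n + 1)) \<ge> 0" "- 1 / (2 * (n + 1)) < 0" by simp_all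
    then show "n / (2 * (n + 1)) \<noteq> - 1 / (2 * (n + 1))" by linarith
  next
    have "n / (2 * (n + 1)) + (real (card B) - 1) * (- 1 / (2 * (n + 1))) = 1 / (2 * (n + 1))"
      unfolding cB n_def by (simp add: field_simps)
    then show "n / (2 * (n + 1)) + (real (card B) - 1) * (- 1 / (2 * (n + 1))) \<noteq> 0"
      unfolding n_def by simp
  qed
  then have "UNIV \<subseteq> span B"
    by (intro eucl.card_ge_dim_independent) (auto simp: cB)
  moreover have "span B \<subseteq> span ((\<lambda>w. w - cen S) ` S)" unfolding B_def
    by (intro span_mono) auto
  ultimately show ?thesis by auto
qed

lemma urs_frame: assumes u: "unit_regular_simplex (S::'a::euclidean_space set)"
  shows "(\<Sum>w\<in>S. (p \<bullet> (w - cen S))^2) = (norm p)^2 / 2"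
proof -
  note bs = urs_basic[OF u]
  define uu where "uu = (\<lambda>w. w - cen S)"
  define f where "f = (\<lambda>p. (\<Sum>w\<in>S. (p \<bullet> uu w) *\<^sub>R uu w) - (1/2) *\<^sub>R p)"
  have lin: "linear f" unfolding f_def
    by (intro linearI) (simp_all add: inner_add_left scaleR_add_left sum.distrib scaleR_add_right algebra_simps scaleR_sum_right)
  define n where "n = real DIM('a)"
  have z: "f (w' - cen S) = 0" if w': "w' \<in> S" for w'
  proof -
    have "(\<Sum>w\<in>S. ((w' - cen S) \<bullet> (w - cen S)) *\<^sub>R (w - cen S)) =
       ((w' - cen S) \<bullet> (w' - cen S)) *\<^sub>R (w' - cen S) + (\<Sum>w\<in>S-{w'}. ((w' - cen S) \<bullet> (w - cen S)) *\<^sub>R (w - cen S))"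
      using sum.remove[OF bs(1) w'] by blast
    also have "(\<Sum>w\<in>S-{w'}. ((w' - cen S) \<bullet> (w - cen S)) *\<^sub>R (w - cen S)) = (\<Sum>w\<in>S-{w'}. (- 1 / (2 * (n + 1))) *\<^sub>R (w - cen S))"
      using urs_inner[OF u w'] unfolding n_def by (intro sum.cong) auto
    also have "\<dots> = (- 1 / (2 * (n + 1))) *\<^sub>R (\<Sum>w\<in>S-{w'}. (w - cen S))" by (simp add: scaleR_sum_right)
    also have "(\<Sum>w\<in>S-{w'}. (w - cen S)) = (\<Sum>w\<in>S. (w - cen S)) - (w' - cen S)"
      using sum.remove[OF bs(1) w', of "\<lambda>w. w - cen S"] by (simp add: algebra_simps)
    also have "\<dots> = - (w' - cen S)" using sum_minus_cen[OF bs(1) bs(3)] by simp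
    also have "(w' - cen S) \<bullet> (w' - cen S) = n / (2 * (n + 1))" using urs_R2[OF u w'] by (simp add: n_def power2_norm_eq_inner)
    also have "(- 1 / (2 * (n + 1))) *\<^sub>R (- (w' - cen S)) = (1 / (2 * (n + 1))) *\<^sub>R (w' - cen S)"
      by (metis scaleR_minus_left scaleR_minus_right minus_minus minus_divide_left)
    also have "(n / (2 * (n + 1))) *\<^sub>R (w' - cen S) + (1 / (2 * (n + 1))) *\<^sub>R (w' - cen S) = (n / (2 * (n + 1)) + 1 / (2 * (n + 1))) *\<^sub>R (w' - cen S)"
      by (rule scaleR_add_left[symmetric])
    finally have "(\<Sum>w\<in>S. ((w' - cen S) \<bullet> (w - cen S)) *\<^sub>R (w - cen S)) = (n / (2 * (n + 1)) + 1 / (2 * (n + 1))) *\<^sub>R (w' - cen S)" .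
    also have "n / (2 * (n + 1)) + 1 / (2 * (n + 1)) = 1/2"
    proof -
      have "n \<ge> 0" unfolding n_def by simp
      then show ?thesis by (simp add: divide_simps)
    qed
    finally show ?thesis unfolding f_def uu_def by simp
  qed
  have "f p = 0"
    using real_vector.linear_eq_0_on_span[OF lin, of "(\<lambda>w. w - cen S) ` S" p] z urs_span[OF u] by auto
  then have "p \<bullet> f p = 0" by simp
  then show ?thesis unfolding f_def uu_def
    by (simp add: inner_diff_right inner_sum_right power2_eq_square power2_norm_eq_inner[symmetric])
qed



lemma core_arith:
  fixes N \<kappa> \<epsilon> \<beta> t :: real
  assumes N2: "N \<ge> 2" and Ncase: "N = 2 \<or> N \<ge> 3"
    and eps: "\<epsilon> = 2 * \<beta> + \<beta>^2" and b0: "0 \<le> \<beta>" and bsmall: "\<beta> * (10000 * N^6) \<le> 1"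
    and k1: "2 * \<epsilon> / (3 * N) \<le> \<kappa>" and k2: "\<kappa> \<le> N * \<epsilon> - (N - 1) * (2 * \<epsilon> / (3 * N))"
    and H2: "N * t \<ge> 1 + N * \<kappa>"
    and H3: "t^2 + (1 + N * \<kappa> - t)^2 \<ge> 1 + 2 * \<epsilon> + N * \<kappa>^2"
    and H4: "2 * t * (1 + N * \<kappa> - t) \<le> (1 + N * \<kappa>)^2 - (1 + 2 * \<epsilon> + N * \<kappa>^2)"
    and H5: "1 + N * \<kappa> - t \<ge> 0"
    and H6: "t \<le> 1 + \<epsilon>"
  shows "1 + \<epsilon> - t \<le> (N * (N - 1)^2 * \<beta>)^2"
proof -
  define y where "y = 1 + \<epsilon> - t"
  define s where "s = 1 + N * \<kappa> - t"
  define \<alpha> where "\<alpha> = N * \<kappa>"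
  have y0: "y \<ge> 0" using H6 y_def by simp
  have s0: "s \<ge> 0" using H5 s_def by simp
  have N6: "N^6 \<ge> 64" using power_mono[OF N2, of 6] by simp
  have e0: "\<epsilon> \<ge> 0" using eps b0 by simp
  have b1: "\<beta> \<le> 1/640000" using bsmall mult_left_mono[OF N6 b0] by simp
  have "\<beta> * \<beta> \<le> \<beta> * (1/640000)" using mult_left_mono[OF b1 b0] .
  then have eb: "\<epsilon> \<le> 2.0001 * \<beta>" using eps b0 b1 by (simp add: power2_eq_square)
  have esmall: "\<epsilon> * (4999 * N^6) \<le> 1"
  proof -
    have "\<epsilon> * (4999 * N^6) \<le> (2.0001 * \<beta>) * (4999 * N^6)" by (rule mult_right_mono[OF eb]) (use N6 in simp)
    moreover have "\<beta> * N^6 \<ge> 0" using b0 N6 by simp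
    ultimately show ?thesis using bsmall by (simp add: algebra_simps)
  qed
  have kap0: "\<kappa> \<ge> 0" using k1 e0 N2 by (smt (verit) divide_nonneg_pos)
  have kapN: "\<kappa> \<le> N * \<epsilon>" using k2 e0 N2 by (smt (verit) divide_nonneg_pos mult_nonneg_nonneg)
  have N2e: "N^2 * \<epsilon> \<le> 1/4999"
  proof -
    have "N^2 \<le> N^6" using N2 by (simp add: power_increasing)
    then have "N^2 * \<epsilon> \<le> N^6 * \<epsilon>" using e0 by (simp add: mult_right_mono)
    then show ?thesis using esmall by (simp add: algebra_simps)
  qed
  have sy: "s = \<alpha> - \<epsilon> + y" unfolding s_def y_def \<alpha>_def by simp
  have al0: "\<alpha> \<ge> 0" unfolding \<alpha>_def using kap0 N2 by simp
  have alN: "\<alpha> \<le> N^2 * \<epsilon>" unfolding \<alpha>_def using mult_left_mono[OF kapN, of N] N2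
    by (simp add: power2_eq_square mult.assoc)
  have t1: "N * t \<ge> 1" using H2 al0 \<alpha>_def by simp
  have F: "2 * t * s \<le> 2 * \<alpha> + \<alpha>^2"
  proof -
    have "N * \<kappa>^2 \<ge> 0" using N2 by simp
    then show ?thesis using H4 e0 unfolding s_def \<alpha>_def by (simp add: power2_eq_square algebra_simps)
  qed
  have "2 * s \<le> N * (2 * t * s)"
  proof -
    have "2 * s \<le> 2 * s * (N * t)" using mult_left_mono[OF t1, of "2 * s"] s0 by simp
    then show ?thesis by (simp add: algebra_simps)
  qed
  also have "\<dots> \<le> N * (2 * \<alpha> + \<alpha>^2)" using mult_left_mono[OF F, of N] N2 by simp
  finally have s1: "2 * s \<le> N * (2 * \<alpha> + \<alpha>^2)" .
  have "\<alpha>^2 \<le> (N^2 * \<epsilon>)^2" using power_mono[OF alN al0] .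
  also have "\<dots> = (N^2 * \<epsilon>) * (N^2 * \<epsilon>)" by (simp add: power2_eq_square)
  also have "\<dots> \<le> (N^2 * \<epsilon>) * (1/4999)" using mult_left_mono[OF N2e] N2 e0 by simp
  finally have al2: "\<alpha>^2 \<le> N^2 * \<epsilon> / 4999" by simp
  have "2 * \<alpha> + \<alpha>^2 \<le> 2 * (N^2 * \<epsilon>) + N^2 * \<epsilon> / 4999" using alN al2 by linarith
  from mult_left_mono[OF this, of N] N2 have "N * (2 * \<alpha> + \<alpha>^2) \<le> N * (2 * (N^2 * \<epsilon>) + N^2 * \<epsilon> / 4999)" by simp
  with s1 have "2 * s \<le> N * (2 * (N^2 * \<epsilon>) + N^2 * \<epsilon> / 4999)" by linarith
  moreover have "N^3 * \<epsilon> \<ge> 0" using N2 e0 by simp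
  ultimately have s2: "s \<le> (5001/5000) * (N^3 * \<epsilon>)" by (simp add: power2_eq_square power3_eq_cube algebra_simps)
  have N3: "N^3 \<ge> 8" using power_mono[OF N2, of 3] by simp
  have N3e: "N^3 * \<epsilon> \<ge> 8 * \<epsilon>" using mult_right_mono[of 8 "N^3" \<epsilon>] N3 e0 by simp
  have y1: "y \<le> 2 * (N^3 * \<epsilon>)" using sy s2 al0 N3e e0 by linarith
  have main: "2 * y + N * \<kappa>^2 \<le> (\<epsilon> - y)^2 + s^2"
    using H3 unfolding s_def y_def by (simp add: power2_eq_square algebra_simps)
  have "(\<epsilon> - y)^2 \<le> (3 * (N^3 * \<epsilon>))^2"
    using y1 y0 e0 N3e by (intro power2_le_iff_abs_le[THEN iffD2]) (auto simp: abs_le_iff)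
  moreover have "s^2 \<le> (2 * (N^3 * \<epsilon>))^2" using s2 s0 e0 N3e by (intro power_mono) auto
  moreover have "N * \<kappa>^2 \<ge> 0" using N2 by simp
  ultimately have "2 * y \<le> 13 * ((N^3 * \<epsilon>)^2)" using main by (simp add: power_mult_distrib)
  also have "(N^3 * \<epsilon>)^2 = (N^6 * \<epsilon>) * \<epsilon>" by (simp add: power2_eq_square power_mult_distrib algebra_simps flip: power_add)
  also have "\<dots> \<le> (1/4999) * \<epsilon>" using mult_right_mono[OF _ e0, of "N^6 * \<epsilon>" "1/4999"] esmall by (simp add: algebra_simps)
  finally have "2 * y \<le> 13 * ((1/4999) * \<epsilon>)" by simp
  then have y2: "y \<le> \<epsilon> / 100" using e0 by linarith
  have mainN: "2 * N * y + \<alpha>^2 \<le> N * (\<epsilon> - y)^2 + N * s^2"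
  proof -
    have "N * (2 * y + N * \<kappa>^2) \<le> N * ((\<epsilon> - y)^2 + s^2)" using mult_left_mono[OF main, of N] N2 by simp
    then show ?thesis unfolding \<alpha>_def by (simp add: power2_eq_square algebra_simps)
  qed
  have bb: "\<epsilon>^2 \<le> (2.0001 * \<beta>)^2" using eb e0 by (intro power_mono) auto
  have ey: "(\<epsilon> - y)^2 \<le> \<epsilon>^2" using y0 y2 e0 by (intro power_mono) auto
  show ?thesis
  proof (cases "N = 2")
    case True
    have a1: "\<alpha> \<ge> 2 * \<epsilon> / 3" using k1 True unfolding \<alpha>_def by simp
    have a2: "\<alpha> \<le> 10 * \<epsilon> / 3" using k2 True unfolding \<alpha>_def by simp
    have p1: "(\<alpha> - 2*\<epsilon>/3)*(10*\<epsilon>/3 - \<alpha>) \<ge> 0" using a1 a2 by simp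
    have p1e: "(\<alpha> - 2*\<epsilon>/3)*(10*\<epsilon>/3 - \<alpha>) = -(\<alpha>*\<alpha>) + 4*(\<alpha>*\<epsilon>) - (20/9)*(\<epsilon>*\<epsilon>)"
      by (simp add: field_simps)
    have p2: "\<alpha>*y \<le> (10/3)*(\<epsilon>*y)" using mult_right_mono[OF a2 y0] by simp
    have p3: "\<epsilon>*y \<le> (1/100)*(\<epsilon>*\<epsilon>)" using mult_left_mono[OF y2 e0] by simp
    have p4: "y*y \<le> (1/100)*(\<epsilon>*y)" using mult_right_mono[OF y2 y0] by simp
    have ex: "2*(\<alpha> - \<epsilon> + y)^2 = 2*(\<alpha>*\<alpha>) - 4*(\<alpha>*\<epsilon>) + 4*(\<alpha>*y) + 2*(\<epsilon>*\<epsilon>) - 4*(\<epsilon>*y) + 2*(y*y)"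
      by (simp add: power2_eq_square algebra_simps)
    have "2*(\<alpha> - \<epsilon> + y)^2 \<le> \<alpha>^2"
      using ex p1 p1e p2 p3 p4 mult_nonneg_nonneg[OF e0 e0] power2_eq_square[of \<alpha>] by linarith
    moreover have "4*y + \<alpha>^2 \<le> 2*(\<epsilon> - y)^2 + 2*(\<alpha> - \<epsilon> + y)^2" using mainN True sy by simp
    ultimately have "4 * y \<le> 2 * \<epsilon>^2" using ey by linarith
    then have "y \<le> (2.0001 * \<beta>)^2 / 2" using bb by simp
    also have "\<dots> \<le> (N * (N - 1)^2 * \<beta>)^2" using True by (simp add: power2_eq_square)
    finally show ?thesis unfolding y_def .
  next
    case False
    then have N3: "N \<ge> 3" using Ncase by simp
    define m where "m = \<epsilon> - y"
    define A where "A = N^2 * \<epsilon>"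
    have m0: "m \<ge> 0" "m \<le> \<epsilon>" using y0 y2 e0 unfolding m_def by auto
    have sm: "s = \<alpha> - m" unfolding m_def sy by simp
    have q1: "\<alpha> * \<alpha> \<le> A * \<alpha>" using alN al0 unfolding A_def by (rule mult_right_mono)
    have q2: "(N - 1) * (\<alpha> * \<alpha>) \<le> (N - 1) * (A * \<alpha>)" using q1 N3 by (intro mult_left_mono) auto
    have q3: "(N - 1) * (A * \<alpha>) \<le> (N - 1) * (A * A)" using alN al0 N3 e0 unfolding A_def
      by (intro mult_left_mono) (auto intro: mult_left_mono)
    have q4: "N * (m * \<alpha>) \<ge> 0" using m0 al0 N3 by simp
    have q5: "N * (m * m) \<le> N * (\<epsilon> * \<epsilon>)" using m0 N3 by (intro mult_left_mono mult_mono) auto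
    have "N * s^2 - \<alpha>^2 = (N - 1) * (\<alpha> * \<alpha>) - 2 * (N * (m * \<alpha>)) + N * (m * m)"
      unfolding sm by (simp add: power2_eq_square algebra_simps)
    also have "\<dots> \<le> (N - 1) * (A * A) + N * (\<epsilon> * \<epsilon>)" using q2 q3 q4 q5 by linarith
    moreover have "N*(\<epsilon> - y)^2 \<le> N*\<epsilon>^2" using mult_left_mono[OF ey] N3 by simp
    ultimately have "2 * N * y \<le> N * \<epsilon>^2 + (N - 1) * (A * A) + N * (\<epsilon> * \<epsilon>)"
      using mainN by linarith
    then have "2 * N * y \<le> N * (2 * \<epsilon>^2 + (N - 1) * N^3 * \<epsilon>^2)" unfolding A_def
      by (simp add: power2_eq_square power3_eq_cube algebra_simps)
    then have "2 * y \<le> 2 * \<epsilon>^2 + (N - 1) * N^3 * \<epsilon>^2" using N3 by simp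
    define W where "W = (N - 1) * N^3"
    have y3: "2 * y \<le> \<epsilon>^2 * (2 + W)" using \<open>2 * y \<le> 2 * \<epsilon>^2 + (N - 1) * N^3 * \<epsilon>^2\<close>
      unfolding W_def by (simp add: algebra_simps)
    have W0: "2 + W \<ge> 0" unfolding W_def using N3 by simp
    have n1: "(N-1)*(N-1) \<ge> 2*(N-1)" using N3 by (intro mult_right_mono) auto
    have n2: "(N-1)*((N-1)*(N-1)) \<ge> (N-1)*(2*(N-1))" using n1 N3 by (intro mult_left_mono) auto
    have n3: "(N-1)^3 \<ge> 2.5 * N" using n1 n2 N3 by (simp add: power3_eq_cube algebra_simps)
    have n4: "N^2 * (N-1) * (N-1)^3 \<ge> N^2 * (N-1) * (2.5 * N)" using n3 N3 by (intro mult_left_mono) auto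
    have n5: "N^3 \<ge> 27" using power_mono[OF N3, of 3] by simp
    have n6: "W \<ge> 54" unfolding W_def using mult_mono[OF _ n5, of 2 "N - 1"] N3 by simp
    have poly: "(400040001/100000000) * (2 + W) \<le> 2 * (N^2 * (N - 1)^4)"
    proof -
      have "2.5 * W = N^2 * (N-1) * (2.5 * N)" unfolding W_def by (simp add: power2_eq_square power3_eq_cube field_simps)
      also have "\<dots> \<le> N^2 * (N-1) * (N-1)^3" by (rule n4)
      also have "\<dots> = N^2 * (N - 1)^4" by (simp add: power_numeral_reduce)
      finally have "2.5 * W \<le> N^2 * (N - 1)^4" .
      then show ?thesis using n6 by (simp add: distrib_left)
    qed
    have bb': "\<epsilon>^2 \<le> (400040001/100000000) * \<beta>^2" using bb by (simp add: power_mult_distrib power_divide)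
    have "2 * y \<le> ((400040001/100000000) * \<beta>^2) * (2 + W)" using y3 mult_right_mono[OF bb' W0] by linarith
    also have "\<dots> = \<beta>^2 * ((400040001/100000000) * (2 + W))" by simp
    also have "\<dots> \<le> \<beta>^2 * (2 * (N^2 * (N - 1)^4))" using poly by (intro mult_left_mono) auto
    finally have "y \<le> \<beta>^2 * (N^2 * (N - 1)^4)" by simp
    moreover have "(N * (N - 1)^2 * \<beta>)^2 = \<beta>^2 * (N^2 * (N - 1)^4)"
      by (simp add: power_mult_distrib power_mult[symmetric] mult_ac)
    ultimately show ?thesis unfolding y_def by simp
  qed
qed


lemma comb_max:
  fixes \<theta> :: "'b \<Rightarrow> real"
  assumes fin: "finite J" and ne: "J \<noteq> {}" and nn: "\<And>j. j \<in> J \<Longrightarrow> \<theta> j \<ge> 0"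
  shows "\<exists>j\<in>J. real (card J) * \<theta> j \<ge> sum \<theta> J \<and> (\<theta> j)^2 + (sum \<theta> J - \<theta> j)^2 \<ge> (\<Sum>i\<in>J. (\<theta> i)^2)
      \<and> 2 * \<theta> j * (sum \<theta> J - \<theta> j) \<le> (sum \<theta> J)^2 - (\<Sum>i\<in>J. (\<theta> i)^2) \<and> sum \<theta> J - \<theta> j \<ge> 0"
proof -
  have "Max (\<theta> ` J) \<in> \<theta> ` J" using fin ne by simp
  then obtain j where j: "j \<in> J" and jm: "\<theta> j = Max (\<theta> ` J)" by (metis imageE)
  have jmax: "\<theta> i \<le> \<theta> j" if "i \<in> J" for i using jm fin that by simp
  define J' where "J' = J - {j}"
  define S' where "S' = sum \<theta> J'"
  have fJ': "finite J'" using fin J'_def by simp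
  have sJ: "sum \<theta> J = \<theta> j + S'" unfolding S'_def J'_def by (simp add: sum.remove[OF fin j])
  have qJ: "(\<Sum>i\<in>J. (\<theta> i)^2) = (\<theta> j)^2 + (\<Sum>i\<in>J'. (\<theta> i)^2)" unfolding J'_def
    by (simp add: sum.remove[OF fin j])
  have nn': "\<And>i. i \<in> J' \<Longrightarrow> \<theta> i \<ge> 0" using nn J'_def by auto
  have S'0: "S' \<ge> 0" unfolding S'_def using nn' by (simp add: sum_nonneg)
  have c1: "sum \<theta> J \<le> real (card J) * \<theta> j"
  proof -
    have "sum \<theta> J \<le> sum (\<lambda>_. \<theta> j) J" using jmax by (intro sum_mono) auto
    then show ?thesis by simp
  qed
  have c2: "(\<Sum>i\<in>J'. (\<theta> i)^2) \<le> S'^2"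
  proof -
    have "(\<Sum>i\<in>J'. (\<theta> i)^2) \<le> (\<Sum>i\<in>J'. \<theta> i * S')"
    proof (intro sum_mono)
      fix i assume i: "i \<in> J'"
      have "\<theta> i \<le> S'" unfolding S'_def using member_le_sum[of i J' \<theta>] nn' fJ' i by auto
      then show "(\<theta> i)^2 \<le> \<theta> i * S'" using nn'[OF i] by (simp add: power2_eq_square mult_left_mono)
    qed
    also have "\<dots> = S'^2" unfolding S'_def by (simp add: sum_distrib_right power2_eq_square)
    finally show ?thesis .
  qed
  have c3: "2 * \<theta> j * S' \<le> (sum \<theta> J)^2 - (\<Sum>i\<in>J. (\<theta> i)^2)"
  proof -
    have "(sum \<theta> J)^2 - (\<Sum>i\<in>J. (\<theta> i)^2) = (\<Sum>i\<in>J. \<theta> i * (sum \<theta> J - \<theta> i))"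
      by (simp add: power2_eq_square sum_distrib_left sum_distrib_right sum_subtractf algebra_simps)
    also have "\<dots> = \<theta> j * (sum \<theta> J - \<theta> j) + (\<Sum>i\<in>J'. \<theta> i * (sum \<theta> J - \<theta> i))"
      unfolding J'_def by (simp add: sum.remove[OF fin j])
    also have "(\<Sum>i\<in>J'. \<theta> i * (sum \<theta> J - \<theta> i)) \<ge> (\<Sum>i\<in>J'. \<theta> i * \<theta> j)"
    proof (intro sum_mono)
      fix i assume i: "i \<in> J'"
      then have iJ: "i \<in> J" and ij: "i \<noteq> j" using J'_def by auto
      have "sum \<theta> J = \<theta> i + sum \<theta> (J - {i})" by (simp add: sum.remove[OF fin iJ])
      moreover have "\<theta> j \<le> sum \<theta> (J - {i})"
        using member_le_sum[of j "J - {i}" \<theta>] j ij nn fin by auto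
      ultimately have "\<theta> j \<le> sum \<theta> J - \<theta> i" by simp
      then show "\<theta> i * \<theta> j \<le> \<theta> i * (sum \<theta> J - \<theta> i)" using nn'[OF i] by (simp add: mult_left_mono)
    qed
    moreover have "(\<Sum>i\<in>J'. \<theta> i * \<theta> j) = \<theta> j * S'" unfolding S'_def by (simp add: sum_distrib_left mult.commute)
    moreover have "\<theta> j * (sum \<theta> J - \<theta> j) = \<theta> j * S'" using sJ by simp
    moreover have "2 * \<theta> j * S' = \<theta> j * S' + \<theta> j * S'" by simp
    ultimately show ?thesis by linarith
  qed
  show ?thesis
  proof (intro bexI[OF _ j] conjI)
    show "real (card J) * \<theta> j \<ge> sum \<theta> J" using c1 .
    show "(\<theta> j)^2 + (sum \<theta> J - \<theta> j)^2 \<ge> (\<Sum>i\<in>J. (\<theta> i)^2)" using c2 qJ sJ by simp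
    show "2 * \<theta> j * (sum \<theta> J - \<theta> j) \<le> (sum \<theta> J)^2 - (\<Sum>i\<in>J. (\<theta> i)^2)" using c3 sJ by simp
    show "sum \<theta> J - \<theta> j \<ge> 0" using sJ S'0 by simp
  qed
qed

lemma kappa_props:
  fixes \<theta> :: "'b \<Rightarrow> real" and N \<kappa> \<epsilon> :: real
  assumes fin: "finite J" and nn: "\<And>j. j \<in> J \<Longrightarrow> \<theta> j \<ge> 0" and N: "N \<ge> 2"
    and s1: "sum \<theta> J = 1 + N * \<kappa>" and s2: "(\<Sum>j\<in>J. (\<theta> j)^2) = 1 + 2 * \<epsilon> + N * \<kappa>^2"
    and e0: "\<epsilon> \<ge> 0"
  shows "\<kappa> \<ge> 0" "N * \<kappa> * (2 + (N - 1) * \<kappa>) \<ge> 2 * \<epsilon>"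
proof -
  have sq: "(\<Sum>j\<in>J. (\<theta> j)^2) \<le> (sum \<theta> J)^2"
  proof -
    have "(\<Sum>j\<in>J. (\<theta> j)^2) \<le> (\<Sum>j\<in>J. \<theta> j * sum \<theta> J)"
    proof (intro sum_mono)
      fix i assume i: "i \<in> J"
      have "\<theta> i \<le> sum \<theta> J" using member_le_sum[of i J \<theta>] nn fin i by auto
      then show "(\<theta> i)^2 \<le> \<theta> i * sum \<theta> J" using nn[OF i] by (simp add: power2_eq_square mult_left_mono)
    qed
    also have "\<dots> = (sum \<theta> J)^2" by (simp add: sum_distrib_right power2_eq_square)
    finally show ?thesis .
  qed
  have F: "N * \<kappa> * (2 + (N - 1) * \<kappa>) \<ge> 2 * \<epsilon>"
    using sq s1 s2 by (simp add: power2_eq_square algebra_simps)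
  then show "N * \<kappa> * (2 + (N - 1) * \<kappa>) \<ge> 2 * \<epsilon>" .
  have sg: "1 + N * \<kappa> \<ge> 0" using s1 nn by (metis sum_nonneg)
  show "\<kappa> \<ge> 0"
  proof (rule ccontr)
    assume "\<not> \<kappa> \<ge> 0"
    then have kn: "\<kappa> < 0" by simp
    have "N * \<kappa> \<ge> -1" using sg by simp
    then have "(N - 1) * \<kappa> > -1"
    proof -
      have "(N - 1) * \<kappa> = N * \<kappa> - \<kappa>" by (simp add: algebra_simps)
      then show ?thesis using \<open>N * \<kappa> \<ge> -1\<close> kn by linarith
    qed
    then have "2 + (N - 1) * \<kappa> > 0" by simp
    moreover have "N * \<kappa> < 0" using kn N by (simp add: mult_pos_neg)
    ultimately have "N * \<kappa> * (2 + (N - 1) * \<kappa>) < 0" by (simp add: mult_neg_pos)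
    then show False using F e0 by simp
  qed
qed



lemma theta_sums:
  fixes S' :: "'a::euclidean_space set" and v :: 'a and L :: real
  assumes u: "unit_regular_simplex S'"
  shows "(\<Sum>w\<in>S'. L - (norm (v - w))^2) = 1 + (real DIM('a) + 1) * (L - 1 + real DIM('a) / (2 * (real DIM('a) + 1)) - (norm (v - cen S'))^2)"
    and "(\<Sum>w\<in>S'. (L - (norm (v - w))^2)^2) = 1 + 2 * (L - 1) + (real DIM('a) + 1) * (L - 1 + real DIM('a) / (2 * (real DIM('a) + 1)) - (norm (v - cen S'))^2)^2"
proof -
  note bs = urs_basic[OF u]
  define d where "d = real DIM('a)"
  define N where "N = d + 1"
  define c where "c = cen S'"
  define p where "p = v - c"
  define r where "r = (norm p)^2"
  define R2 where "R2 = d / (2 * N)"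
  define A where "A = L - r - R2"
  define \<kappa> where "\<kappa> = L - 1 + R2 - r"
  have Npos: "N > 0" unfolding N_def d_def by simp
  have cardN: "real (card S') = N" using bs(2) unfolding N_def d_def by simp
  have th: "L - (norm (v - w))^2 = A + 2 * (p \<bullet> (w - c))" if w: "w \<in> S'" for w
  proof -
    have "v - w = p - (w - c)" unfolding p_def by simp
    then have "(norm (v - w))^2 = r - 2 * (p \<bullet> (w - c)) + (norm (w - c))^2" unfolding r_def
      by (simp add: power2_norm_eq_inner inner_diff_left inner_diff_right inner_commute algebra_simps)
    also have "(norm (w - c))^2 = R2" unfolding c_def R2_def N_def d_def using urs_R2[OF u w] by simp
    finally show ?thesis unfolding A_def by simp
  qed
  have sx: "(\<Sum>w\<in>S'. p \<bullet> (w - c)) = 0"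
    using sum_minus_cen[OF bs(1) bs(3)] unfolding c_def by (simp add: inner_sum_right[symmetric])
  have fr: "(\<Sum>w\<in>S'. (p \<bullet> (w - c))^2) = r / 2" unfolding r_def c_def using urs_frame[OF u] .
  have AK: "A = \<kappa> + 1 / N"
  proof -
    have "1 - 2 * R2 = 1 / N" unfolding R2_def N_def using Npos N_def by (simp add: divide_simps)
    then show ?thesis unfolding A_def \<kappa>_def by simp
  qed
  have "(\<Sum>w\<in>S'. L - (norm (v - w))^2) = (\<Sum>w\<in>S'. A + 2 * (p \<bullet> (w - c)))" using th by simp
  also have "\<dots> = N * A" using sx cardN by (simp add: sum.distrib sum_distrib_left[symmetric])
  also have "\<dots> = 1 + N * \<kappa>" unfolding AK using Npos by (simp add: algebra_simps)
  finally show "(\<Sum>w\<in>S'. L - (norm (v - w))^2) = 1 + (real DIM('a) + 1) * (L - 1 + real DIM('a) / (2 * (real DIM('a) + 1)) - (norm (v - cen S'))^2)"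
    unfolding \<kappa>_def R2_def N_def d_def r_def p_def c_def .
  have "(\<Sum>w\<in>S'. (L - (norm (v - w))^2)^2) = (\<Sum>w\<in>S'. (A + 2 * (p \<bullet> (w - c)))^2)" using th by simp
  also have "\<dots> = (\<Sum>w\<in>S'. A^2 + 4 * A * (p \<bullet> (w - c)) + 4 * (p \<bullet> (w - c))^2)"
    by (simp add: power2_eq_square algebra_simps)
  also have "\<dots> = N * A^2 + 4 * A * (\<Sum>w\<in>S'. p \<bullet> (w - c)) + 4 * (\<Sum>w\<in>S'. (p \<bullet> (w - c))^2)"
    using cardN by (simp add: sum.distrib sum_distrib_left)
  also have "\<dots> = N * A^2 + 2 * r" using sx fr by simp
  also have "\<dots> = 1 + 2 * (L - 1) + N * \<kappa>^2"
  proof -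
    have "N * A^2 = N * \<kappa>^2 + 2 * \<kappa> + 1 / N" unfolding AK using Npos
      by (simp add: power2_eq_square field_simps)
    moreover have "2 * \<kappa> + 1 / N + 2 * r = 2 * L - 1"
    proof -
      have "2 * R2 + 1 / N = (d + 1) / N" unfolding R2_def by (simp add: add_divide_distrib)
      also have "\<dots> = 1" using Npos N_def by simp
      finally have "2 * R2 + 1 / N = 1" .
      then show ?thesis unfolding \<kappa>_def by simp
    qed
    ultimately show ?thesis by simp
  qed
  finally show "(\<Sum>w\<in>S'. (L - (norm (v - w))^2)^2) = 1 + 2 * (L - 1) + (real DIM('a) + 1) * (L - 1 + real DIM('a) / (2 * (real DIM('a) + 1)) - (norm (v - cen S'))^2)^2"
    unfolding \<kappa>_def R2_def N_def d_def r_def p_def c_def .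
qed



lemma near:
  fixes S S' :: "'a::euclidean_space set" and \<beta> :: real
  assumes u: "unit_regular_simplex S" and u': "unit_regular_simplex S'"
    and b0: "0 \<le> \<beta>" and bs: "\<beta> * (10000 * (real DIM('a) + 1)^6) \<le> 1"
    and dd: "\<And>v w. v \<in> S \<Longrightarrow> w \<in> S' \<Longrightarrow> dist v w \<le> 1 + \<beta>"
    and v: "v \<in> S"
  shows "\<exists>w\<in>S'. dist v w \<le> (real DIM('a) + 1) * (real DIM('a))^2 * \<beta>"
proof -
  note bs1 = urs_basic[OF u] and bs2 = urs_basic[OF u']
  define d where "d = real DIM('a)"
  define N where "N = d + 1"
  define \<epsilon> where "\<epsilon> = 2 * \<beta> + \<beta>^2"
  define L where "L = (1 + \<beta>)^2"
  have L1: "L - 1 = \<epsilon>" unfolding L_def \<epsilon>_def by (simp add: power2_eq_square algebra_simps)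
  define \<kappa> :: "'a \<Rightarrow> real" where "\<kappa> = (\<lambda>x. L - 1 + d / (2 * N) - (norm (x - cen S'))^2)"
  define \<theta> :: "'a \<Rightarrow> 'a \<Rightarrow> real" where "\<theta> = (\<lambda>x w. L - (norm (x - w))^2)"
  have d1: "d \<ge> 1" unfolding d_def using DIM_positive[where 'a='a] by linarith
  have N2: "N \<ge> 2" unfolding N_def using d1 by simp
  have Ncase: "N = 2 \<or> N \<ge> 3"
  proof (cases "DIM('a) = 1")
    case True then show ?thesis unfolding N_def d_def by simp
  next
    case False then have "DIM('a) \<ge> 2" using DIM_positive[where 'a='a] by linarith
    then show ?thesis unfolding N_def d_def by simp
  qed
  have e0: "\<epsilon> \<ge> 0" unfolding \<epsilon>_def using b0 by simp
  have cS: "real (card S) = N" "real (card S') = N" using bs1 bs2 unfolding N_def d_def by simp_all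
  have s1: "sum (\<theta> x) S' = 1 + N * \<kappa> x" for x
    using theta_sums(1)[OF u', of L x] unfolding \<theta>_def \<kappa>_def N_def d_def by simp
  have s2: "(\<Sum>w\<in>S'. (\<theta> x w)^2) = 1 + 2 * \<epsilon> + N * (\<kappa> x)^2" for x
    using theta_sums(2)[OF u', of L x] L1 unfolding \<theta>_def \<kappa>_def N_def d_def by simp
  have nn: "\<theta> x w \<ge> 0" if "x \<in> S" "w \<in> S'" for x w
  proof -
    have "norm (x - w) \<le> 1 + \<beta>" using dd[OF that] by (simp add: dist_norm)
    then have "(norm (x - w))^2 \<le> (1 + \<beta>)^2" by (intro power_mono) auto
    then show ?thesis unfolding \<theta>_def L_def by simp
  qed
  have kp: "\<kappa> x \<ge> 0 \<and> N * \<kappa> x * (2 + (N - 1) * \<kappa> x) \<ge> 2 * \<epsilon>" if x: "x \<in> S" for x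
    using kappa_props[OF bs2(1) _ N2 s1 s2 e0, of x] nn[OF x] by auto
  have glob: "sum \<kappa> S \<le> N * \<epsilon>"
  proof -
    have "sum \<kappa> S = N * (L - 1 + d / (2 * N)) - (\<Sum>x\<in>S. (norm (x - cen S'))^2)"
      unfolding \<kappa>_def using cS by (simp add: sum_subtractf)
    moreover have "(\<Sum>x\<in>S. (norm (x - cen S'))^2) \<ge> d / 2"
    proof -
      have "(\<Sum>x\<in>S. (norm (x - cen S'))^2) = (\<Sum>x\<in>S. (norm (cen S' - x))^2)"
        by (simp add: norm_minus_commute)
      also have "\<dots> = real (card S) * (norm (cen S' - cen S))^2 + (\<Sum>b\<in>S. (norm (b - cen S))^2)"
        by (rule par_axis[OF bs1(1) bs1(3)])
      also have "(\<Sum>b\<in>S. (norm (b - cen S))^2) = (\<Sum>b\<in>S. d / (2 * N))"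
        using urs_R2[OF u] unfolding d_def N_def by simp
      also have "\<dots> = d / 2" using cS N2 by simp
      finally show ?thesis by simp
    qed
    moreover have "N * (d / (2 * N)) = d / 2" using N2 by simp
    ultimately show ?thesis using L1 by (simp add: algebra_simps)
  qed
  have N6: "N^2 \<le> N^6" using N2 by (simp add: power_increasing)
  have b1: "\<beta> \<le> 1"
  proof -
    have "N^6 \<ge> 1" using N2 one_le_power[of N 6] by simp
    then have "\<beta> \<le> \<beta> * (10000 * N^6)" using b0 by (simp add: mult_le_cancel_left1) 
    then show ?thesis using bs unfolding N_def d_def by simp
  qed
  have e3: "\<epsilon> \<le> 3 * \<beta>" unfolding \<epsilon>_def using b0 b1 by (simp add: power2_eq_square mult_left_le)
  have smallN: "N^2 * \<epsilon> \<le> 1"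
  proof -
    have "N^2 * \<epsilon> \<le> N^6 * (3 * \<beta>)" using mult_mono[OF N6 e3] e0 by simp
    also have "\<dots> \<le> 1"
    proof -
      have "\<beta> * N^6 \<ge> 0" using b0 N2 by simp
      moreover have "\<beta> * (10000 * N^6) \<le> 1" using bs unfolding N_def d_def by simp
      ultimately show ?thesis by (simp add: algebra_simps)
    qed
    finally show ?thesis .
  qed
  have kv: "\<kappa> v \<le> N * \<epsilon>"
    using member_le_sum[of v S \<kappa>] kp v bs1(1) glob by auto
  have klo: "2 * \<epsilon> / (3 * N) \<le> \<kappa> x" if x: "x \<in> S" for x
  proof -
    have kx: "\<kappa> x \<le> N * \<epsilon>" using member_le_sum[of x S \<kappa>] kp x bs1(1) glob by auto
    have "(N - 1) * \<kappa> x \<le> (N - 1) * (N * \<epsilon>)" using kx N2 by (intro mult_left_mono) auto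
    also have "\<dots> \<le> N^2 * \<epsilon>" using N2 e0 by (simp add: power2_eq_square algebra_simps mult_right_mono)
    finally have "(N - 1) * \<kappa> x \<le> 1" using smallN by simp
    then have "N * \<kappa> x * (2 + (N - 1) * \<kappa> x) \<le> N * \<kappa> x * 3"
      using kp[OF x] N2 by (intro mult_left_mono) auto
    then have "2 * \<epsilon> \<le> 3 * N * \<kappa> x" using kp[OF x] by simp
    then show ?thesis using N2 by (simp add: divide_simps mult.commute mult.left_commute)
  qed
  have khi: "\<kappa> v \<le> N * \<epsilon> - (N - 1) * (2 * \<epsilon> / (3 * N))"
  proof -
    have "sum \<kappa> S = \<kappa> v + sum \<kappa> (S - {v})" by (simp add: sum.remove[OF bs1(1) v])
    moreover have "sum \<kappa> (S - {v}) \<ge> sum (\<lambda>_. 2 * \<epsilon> / (3 * N)) (S - {v})"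
      using klo by (intro sum_mono) auto
    moreover have "sum (\<lambda>_. 2 * \<epsilon> / (3 * N)) (S - {v}) = (N - 1) * (2 * \<epsilon> / (3 * N))"
      using cS bs1 v by (simp add: card_Diff_singleton of_nat_diff)
    ultimately show ?thesis using glob by linarith
  qed
  obtain w where w: "w \<in> S'"
    and f1: "real (card S') * \<theta> v w \<ge> sum (\<theta> v) S'"
    and f2: "(\<theta> v w)^2 + (sum (\<theta> v) S' - \<theta> v w)^2 \<ge> (\<Sum>i\<in>S'. (\<theta> v i)^2)"
    and f3: "2 * \<theta> v w * (sum (\<theta> v) S' - \<theta> v w) \<le> (sum (\<theta> v) S')^2 - (\<Sum>i\<in>S'. (\<theta> v i)^2)"
    and f4: "sum (\<theta> v) S' - \<theta> v w \<ge> 0"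
    using comb_max[OF bs2(1) bs2(3), of "\<theta> v"] nn[OF v] by blast
  have "1 + \<epsilon> - \<theta> v w \<le> (N * (N - 1)^2 * \<beta>)^2"
  proof (rule core_arith[OF N2 Ncase \<epsilon>_def b0 _ klo[OF v] khi])
    show "\<beta> * (10000 * N^6) \<le> 1" using bs unfolding N_def d_def by simp
    show "N * \<theta> v w \<ge> 1 + N * \<kappa> v" using f1 s1 cS by simp
    show "(\<theta> v w)^2 + (1 + N * \<kappa> v - \<theta> v w)^2 \<ge> 1 + 2 * \<epsilon> + N * (\<kappa> v)^2" using f2 s1 s2 by simp
    show "2 * \<theta> v w * (1 + N * \<kappa> v - \<theta> v w) \<le> (1 + N * \<kappa> v)^2 - (1 + 2 * \<epsilon> + N * (\<kappa> v)^2)"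
      using f3 s1 s2 by simp
    show "1 + N * \<kappa> v - \<theta> v w \<ge> 0" using f4 s1 by simp
    show "\<theta> v w \<le> 1 + \<epsilon>" unfolding \<theta>_def using L1 zero_le_power2[of "norm (v - w)"] by linarith
  qed
  then have "(norm (v - w))^2 \<le> (N * (N - 1)^2 * \<beta>)^2" unfolding \<theta>_def using L1 by simp
  then have "norm (v - w) \<le> N * (N - 1)^2 * \<beta>"
    by (rule power2_le_imp_le) (use N2 b0 in simp)
  then show ?thesis using w unfolding N_def d_def by (auto simp: dist_norm)
qed



lemma hd_le:
  fixes A B :: "'a::metric_space set"
  assumes fA: "finite A" and fB: "finite B" and nA: "A \<noteq> {}" and nB: "B \<noteq> {}"
    and h1: "\<forall>a\<in>A. \<exists>b\<in>B. dist a b \<le> C" and h2: "\<forall>b\<in>B. \<exists>a\<in>A. dist b a \<le> C"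
  shows "hausdorff_dist A B \<le> C"
proof -
  have "(SUP a\<in>A. INF b\<in>B. dist a b) \<le> C"
  proof (rule cSUP_least[OF nA])
    fix a assume a: "a \<in> A"
    then obtain b where b: "b \<in> B" "dist a b \<le> C" using h1 by blast
    have "(INF b\<in>B. dist a b) \<le> dist a b"
      by (rule cINF_lower[OF _ b(1)]) (simp add: fB bdd_below_finite)
    then show "(INF b\<in>B. dist a b) \<le> C" using b by simp
  qed
  moreover have "(SUP b\<in>B. INF a\<in>A. dist a b) \<le> C"
  proof (rule cSUP_least[OF nB])
    fix b assume b: "b \<in> B"
    then obtain a where a: "a \<in> A" "dist b a \<le> C" using h2 by blast
    have "(INF a\<in>A. dist a b) \<le> dist a b"
      by (rule cINF_lower[OF _ a(1)]) (simp add: fA bdd_below_finite)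
    then show "(INF a\<in>A. dist a b) \<le> C" using a by (simp add: dist_commute)
  qed
  ultimately show ?thesis unfolding hausdorff_dist_def by simp
qed

theorem mainTheorem5:
  "\<exists>\<beta>d::real. \<beta>d > 0 \<and>
     (\<forall>(\<Delta>::(real^'n) set) \<Delta>' \<beta>.
        unit_regular_simplex \<Delta> \<longrightarrow> unit_regular_simplex \<Delta>' \<longrightarrow>
        0 \<le> \<beta> \<longrightarrow> \<beta> < \<beta>d \<longrightarrow>
        diameter (\<Delta> \<union> \<Delta>') \<le> 1 + \<beta> \<longrightarrow>
        hausdorff_dist \<Delta> \<Delta>' \<le> real (CARD('n) + 1) * real (CARD('n))^2 * \<beta>)"
proof -
  define N where "N = real (CARD('n)) + 1"
  have Npos: "N > 0" unfolding N_def by simp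
  show ?thesis
  proof (intro exI[of _ "1 / (10000 * N^6)"] conjI allI impI)
    show "1 / (10000 * N^6) > 0" using Npos by simp
    fix \<Delta> :: "(real^'n) set" and \<Delta>' \<beta>
    assume u: "unit_regular_simplex \<Delta>" and u': "unit_regular_simplex \<Delta>'" and b0: "0 \<le> \<beta>"
      and bl: "\<beta> < 1 / (10000 * N^6)" and dm: "diameter (\<Delta> \<union> \<Delta>') \<le> 1 + \<beta>"
    have bs: "\<beta> * (10000 * (real DIM(real^'n) + 1)^6) \<le> 1"
    proof -
      have "\<beta> * (10000 * N^6) < 1" using bl Npos by (simp add: field_simps)
      then show ?thesis unfolding N_def by simp
    qed
    note b1 = urs_basic[OF u] and b2 = urs_basic[OF u']
    have bd: "bounded (\<Delta> \<union> \<Delta>')" using b1 b2 by (simp add: finite_imp_bounded)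
    have dd: "dist v w \<le> 1 + \<beta>" if "v \<in> \<Delta> \<union> \<Delta>'" "w \<in> \<Delta> \<union> \<Delta>'" for v w
      using diameter_bounded_bound[OF bd that] dm by simp
    have n1: "\<forall>v\<in>\<Delta>. \<exists>w\<in>\<Delta>'. dist v w \<le> (real DIM(real^'n) + 1) * (real DIM(real^'n))^2 * \<beta>"
      using near[OF u u' b0 bs] dd by blast
    have n2: "\<forall>v\<in>\<Delta>'. \<exists>w\<in>\<Delta>. dist v w \<le> (real DIM(real^'n) + 1) * (real DIM(real^'n))^2 * \<beta>"
      using near[OF u' u b0 bs] dd by blast
    have "hausdorff_dist \<Delta> \<Delta>' \<le> (real DIM(real^'n) + 1) * (real DIM(real^'n))^2 * \<beta>"
      by (rule hd_le[OF b1(1) b2(1) b1(3) b2(3) n1 n2])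
    then show "hausdorff_dist \<Delta> \<Delta>' \<le> real (CARD('n) + 1) * real (CARD('n))^2 * \<beta>" by (simp add: add.commute)
  qed
qed

end
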